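(* Let $X$ be a simplicial complex, $\sigma=\{v_0,v_1,v_2\}$ a 2-simplex of $X$, and $\Gamma=(v_0,v_1,v_2,v_0)$. If $E\to|X|$ is an $\epsilon$-flat bundle with $\epsilon\le1/\sqrt2$, then $\|T_\Gamma-\mathrm{id}\|\le 7\sqrt2\,\epsilon$.
   Context: Let $A$ be a unital C*-algebra and $V$ a finitely generated projective Hilbert $A$-module (isomorphic to $pA^k$ for a projection $p\in\mathcal L_A(A^k)$); $U(\mathcal L_A(V))$ is the unitary group of the adjointable operators on $V$, metrized by the operator norm. A Hilbert $A$-module bundle with fibre $V$ is a fibre bundle with fibre $V$ and structure group $U(\mathcal L_A(V))$. For a simplicial complex $X$ and a simplex $\sigma$ of dimension $n$ (vertices ordered), $j_\sigma\colon\Delta^n\to|X|$ is the affine embedding of the standard simplex $\Delta^n\subset\mathbb R^{n+1}$ and $|\sigma|=j_\sigma(\Delta^n)$, metrized so that $j_\sigma$ is a Euclidean isometry. A family of trivializations of $E\to|X|$ consists of maps $\Phi_\sigma\colon|\sigma|\times V\to E|_{|\sigma|}$, one for each simplex, with each $\Phi_\sigma(x,\cdot)$ an isomorphism of Hilbert $A$-modules; for $\rho\subset\sigma$ the transition function is $\Psi_{\rho\subset\sigma}(x)=\Phi_\rho(x,\cdot)^{-1}\Phi_\sigma(x,\cdot)$, $x\in|\rho|$. The family is $\epsilon$-flat if all $\Psi_{\rho\subset\sigma}$ are $\epsilon$-Lipschitz; an $\epsilon$-flat bundle is a bundle with an $\epsilon$-flat family of trivializations. For an edge $\{v_0,v_1\}=\tau$,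 $T_{(v_0,v_1)}=\Phi_\tau(v_1,\cdot)\Phi_\tau(v_0,\cdot)^{-1}\colon E_{v_0}\to E_{v_1}$; for a simplicial path $\Gamma=(v_0,\dots,v_k)$ (consecutive vertices span edges), $T_\Gamma=T_{(v_{k-1},v_k)}\cdots T_{(v_0,v_1)}$. Norms are operator norms. *)

theory Defs
  imports "HOL-Analysis.Analysis"
begin

text \<open>A unital C*-algebra is represented by a real unital Banach algebra type 'b
 together with a complex scalar multiplication cmul and an involution st
 satisfying the usual axioms and the C*-identity.  This plays the role of
 the algebra of adjointable operators on V, with its operator norm.\<close>

definition cstar_algebra ::
  "('b::{real_normed_algebra_1, banach} \<Rightarrow> 'b) \<Rightarrow> (complex \<Rightarrow> 'b \<Rightarrow> 'b) \<Rightarrow> bool" where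
  "cstar_algebra st cmul \<longleftrightarrow>
     (\<forall>r a. cmul (complex_of_real r) a = r *\<^sub>R a) \<and>
     (\<forall>c d a. cmul (c + d) a = cmul c a + cmul d a) \<and>
     (\<forall>c a b. cmul c (a + b) = cmul c a + cmul c b) \<and>
     (\<forall>c d a. cmul (c * d) a = cmul c (cmul d a)) \<and>
     (\<forall>c a b. cmul c (a * b) = cmul c a * b) \<and>
     (\<forall>c a b. cmul c (a * b) = a * cmul c b) \<and>
     (\<forall>c a. norm (cmul c a) = cmod c * norm a) \<and>
     (\<forall>a. st (st a) = a) \<and>
     (\<forall>a b. st (a + b) = st a + st b) \<and>
     (\<forall>c a. st (cmul c a) = cmul (cnj c) (st a)) \<and>
     (\<forall>a b. st (a * b) = st b * st a) \<and>
     (\<forall>a. norm (st a * a) = (norm a)\<^sup>2)"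

definition unitary :: "('b::real_normed_algebra_1 \<Rightarrow> 'b) \<Rightarrow> 'b \<Rightarrow> bool" where
  "unitary st u \<longleftrightarrow> st u * u = 1 \<and> u * st u = 1"

definition simplicial_complex :: "'a set set \<Rightarrow> bool" where
  "simplicial_complex X \<longleftrightarrow>
     (\<forall>\<sigma>\<in>X. finite \<sigma> \<and> \<sigma> \<noteq> {}) \<and>
     (\<forall>\<sigma>\<in>X. \<forall>\<rho>. \<rho> \<subseteq> \<sigma> \<and> \<rho> \<noteq> {} \<longrightarrow> \<rho> \<in> X)"

text \<open>Points of the geometric realisation are given by barycentric coordinates;
 the closed simplex |sigma| consists of those supported on sigma.\<close>

definition simplex_pts :: "'a set \<Rightarrow> ('a \<Rightarrow> real) set" where
  "simplex_pts \<sigma> = {x. (\<forall>v. 0 \<le> x v) \<and> (\<forall>v. v \<notin> \<sigma> \<longrightarrow> x v = 0) \<and> sum x \<sigma> = 1}"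

text \<open>The metric on |sigma| making the affine embedding of the standard simplex
 (in R^(n+1)) a Euclidean isometry.\<close>

definition sdist :: "'a set \<Rightarrow> ('a \<Rightarrow> real) \<Rightarrow> ('a \<Rightarrow> real) \<Rightarrow> real" where
  "sdist \<sigma> x y = sqrt (\<Sum>v\<in>\<sigma>. (x v - y v)\<^sup>2)"

definition vtx :: "'a \<Rightarrow> ('a \<Rightarrow> real)" where
  "vtx v = (\<lambda>w. if w = v then 1 else 0)"

text \<open>A family of trivialisations Phi_sigma is recorded by g sigma x, the unitary
 Phi_sigma(x) expressed relative to a (pointwise) reference isomorphism V \<cong> E_x.\<close>

definition trivialization_family ::
  "('b::real_normed_algebra_1 \<Rightarrow> 'b) \<Rightarrow> 'a set set \<Rightarrow> ('a set \<Rightarrow> ('a \<Rightarrow> real) \<Rightarrow> 'b) \<Rightarrow> bool" where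
  "trivialization_family st X g \<longleftrightarrow>
     (\<forall>\<sigma>\<in>X. \<forall>x\<in>simplex_pts \<sigma>. unitary st (g \<sigma> x))"

definition transition ::
  "('b::real_normed_algebra_1 \<Rightarrow> 'b) \<Rightarrow> ('a set \<Rightarrow> ('a \<Rightarrow> real) \<Rightarrow> 'b) \<Rightarrow> 'a set \<Rightarrow> 'a set \<Rightarrow> ('a \<Rightarrow> real) \<Rightarrow> 'b" where
  "transition st g \<rho> \<sigma> x = st (g \<rho> x) * g \<sigma> x"

definition eps_flat ::
  "('b::real_normed_algebra_1 \<Rightarrow> 'b) \<Rightarrow> 'a set set \<Rightarrow> ('a set \<Rightarrow> ('a \<Rightarrow> real) \<Rightarrow> 'b) \<Rightarrow> real \<Rightarrow> bool" where
  "eps_flat st X g \<epsilon> \<longleftrightarrow>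
     (\<forall>\<rho>\<in>X. \<forall>\<sigma>\<in>X. \<rho> \<subseteq> \<sigma> \<longrightarrow>
        (\<forall>x\<in>simplex_pts \<rho>. \<forall>y\<in>simplex_pts \<rho>.
           norm (transition st g \<rho> \<sigma> x - transition st g \<rho> \<sigma> y) \<le> \<epsilon> * sdist \<rho> x y))"

definition edge_transport ::
  "('b::real_normed_algebra_1 \<Rightarrow> 'b) \<Rightarrow> ('a set \<Rightarrow> ('a \<Rightarrow> real) \<Rightarrow> 'b) \<Rightarrow> 'a \<Rightarrow> 'a \<Rightarrow> 'b" where
  "edge_transport st g a b = g {a, b} (vtx b) * st (g {a, b} (vtx a))"

fun path_transport ::
  "('b::real_normed_algebra_1 \<Rightarrow> 'b) \<Rightarrow> ('a set \<Rightarrow> ('a \<Rightarrow> real) \<Rightarrow> 'b) \<Rightarrow> 'a list \<Rightarrow> 'b" where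
  "path_transport st g (a # b # rest) = path_transport st g (b # rest) * edge_transport st g a b"
| "path_transport st g _ = 1"

end

theory Submission
  imports Defs
begin

lemma cs_st_mult: "cstar_algebra st cmul \<Longrightarrow> st (a * b) = st b * st a"
  unfolding cstar_algebra_def by blast
lemma cs_st_st: "cstar_algebra st cmul \<Longrightarrow> st (st a) = a"
  unfolding cstar_algebra_def by blast
lemma cs_cstar: "cstar_algebra st cmul \<Longrightarrow> norm (st a * a) = (norm a)\<^sup>2"
  unfolding cstar_algebra_def by blast

lemma unitary_st: "cstar_algebra st cmul \<Longrightarrow> unitary st u \<Longrightarrow> unitary st (st u)"
  unfolding unitary_def using cs_st_st by metis

lemma unitary_mul:
  assumes "cstar_algebra st cmul" "unitary st u" "unitary st v"
  shows "unitary st (u * v)"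
proof -
  have "st (u * v) * (u * v) = st v * (st u * u) * v" using cs_st_mult[OF assms(1)] by (simp add: mult.assoc)
  moreover have "(u * v) * st (u * v) = u * (v * st v) * st u" using cs_st_mult[OF assms(1)] by (simp add: mult.assoc)
  ultimately show ?thesis using assms(2,3) unfolding unitary_def by simp
qed

lemma unitary_norm:
  assumes "cstar_algebra st cmul" "unitary st u"
  shows "norm u = 1"
proof -
  have "(norm u)^2 = 1" using cs_cstar[OF assms(1), of u] assms(2) unfolding unitary_def by simp
  then have "norm u = 1 \<or> norm u = -1" using power2_eq_1_iff[of "norm u"] by simp
  then show ?thesis using norm_ge_zero[of u] by linarith
qed

lemma diff_bound:
  assumes "cstar_algebra st cmul" "unitary st p" "unitary st q"
  shows "norm (st p * q - 1) \<le> norm (p - q)"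
proof -
  have "st p * q - 1 = st p * (q - p)" using assms(2) unfolding unitary_def by (simp add: algebra_simps)
  then have "norm (st p * q - 1) \<le> norm (st p) * norm (q - p)" by (metis norm_mult_ineq)
  also have "norm (st p) = 1" using unitary_norm[OF assms(1) unitary_st[OF assms(1,2)]] .
  finally show ?thesis by (simp add: norm_minus_commute)
qed

lemma three_bound:
  assumes "cstar_algebra st cmul" "unitary st A" "unitary st B" "unitary st C"
  shows "norm (A * B * C - 1) \<le> norm (A - 1) + norm (B - 1) + norm (C - 1)"
proof -
  have e: "A * B * C - 1 = (A - 1) * (B * C) + (B - 1) * C + (C - 1)" by (simp add: algebra_simps)
  have nBC: "norm (B*C) = 1" using unitary_norm[OF assms(1) unitary_mul[OF assms(1,3,4)]] .
  have nC: "norm C = 1" using unitary_norm[OF assms(1,4)] .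
  have "norm (A * B * C - 1) \<le> norm ((A - 1) * (B * C)) + norm ((B - 1) * C) + norm (C - 1)"
    unfolding e using norm_triangle_ineq[of "(A - 1) * (B * C) + (B - 1) * C" "C - 1"]
      norm_triangle_ineq[of "(A - 1) * (B * C)" "(B - 1) * C"] by linarith
  also have "\<dots> \<le> norm (A - 1) + norm (B - 1) + norm (C - 1)"
    using norm_mult_ineq[of "A-1" "B*C"] norm_mult_ineq[of "B-1" C] nBC nC by simp
  finally show ?thesis .
qed

lemma vtx_in: "a \<in> s \<Longrightarrow> finite s \<Longrightarrow> vtx a \<in> simplex_pts s"
  unfolding simplex_pts_def vtx_def by (auto simp: sum.delta)

lemma sdist_edge: "a \<noteq> b \<Longrightarrow> sdist {a, b} (vtx a) (vtx b) = sqrt 2"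
  unfolding sdist_def vtx_def by simp

lemma edge_lemma:
  assumes cs: "cstar_algebra st cmul" and sc: "simplicial_complex X"
    and sX: "\<sigma> \<in> X" and ab: "a \<in> \<sigma>" "b \<in> \<sigma>" "a \<noteq> b"
    and tf: "trivialization_family st X g" and fl: "eps_flat st X g \<epsilon>"
  shows "edge_transport st g a b = g \<sigma> (vtx b) * (st (transition st g {a,b} \<sigma> (vtx b)) * transition st g {a,b} \<sigma> (vtx a)) * st (g \<sigma> (vtx a))"
    and "unitary st (transition st g {a,b} \<sigma> (vtx a))"
    and "unitary st (transition st g {a,b} \<sigma> (vtx b))"
    and "norm (transition st g {a,b} \<sigma> (vtx b) - transition st g {a,b} \<sigma> (vtx a)) \<le> \<epsilon> * sqrt 2"
proof -
  let ?t = "{a,b}"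
  have scA: "\<forall>\<sigma>\<in>X. finite \<sigma> \<and> \<sigma> \<noteq> {}" and scB: "\<forall>\<sigma>\<in>X. \<forall>\<rho>. \<rho> \<subseteq> \<sigma> \<and> \<rho> \<noteq> {} \<longrightarrow> \<rho> \<in> X"
    using sc unfolding simplicial_complex_def by (rule conjunct1, rule conjunct2)
  have sc1: "finite \<sigma>" using scA sX by blast
  have sc2: "\<And>\<rho>. \<rho> \<subseteq> \<sigma> \<Longrightarrow> \<rho> \<noteq> {} \<Longrightarrow> \<rho> \<in> X"
    using scB sX by blast
  have fin: "finite \<sigma>" by (rule sc1)
  have sub: "?t \<subseteq> \<sigma>" using ab by simp
  have tX: "?t \<in> X" by (rule sc2[OF sub]) simp
  have fint: "finite ?t" by simp
  have pt: "vtx a \<in> simplex_pts ?t" "vtx b \<in> simplex_pts ?t"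
    by (rule vtx_in[OF _ fint], simp)+
  have ps: "vtx a \<in> simplex_pts \<sigma>" "vtx b \<in> simplex_pts \<sigma>"
    by (rule vtx_in[OF ab(1) fin], rule vtx_in[OF ab(2) fin])
  have tf': "\<And>s x. s \<in> X \<Longrightarrow> x \<in> simplex_pts s \<Longrightarrow> unitary st (g s x)"
    using tf unfolding trivialization_family_def by (simp only: Ball_def)
  have u: "unitary st (g \<sigma> x)" "unitary st (g ?t x)" if "x \<in> {vtx a, vtx b}" for x
  proof -
    have "x = vtx a \<or> x = vtx b" using that by simp
    then show "unitary st (g \<sigma> x)" "unitary st (g ?t x)"
      using tf'[OF sX] tf'[OF tX] pt ps by auto
  qed
  have rep: "g ?t x = g \<sigma> x * st (transition st g ?t \<sigma> x)" if "x \<in> {vtx a, vtx b}" for x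
  proof -
    have "g \<sigma> x * st (transition st g ?t \<sigma> x) = (g \<sigma> x * st (g \<sigma> x)) * g ?t x"
      unfolding transition_def using cs_st_mult[OF cs] cs_st_st[OF cs] by (simp add: mult.assoc)
    then show ?thesis using u(1)[OF that] unfolding unitary_def by simp
  qed
  have "edge_transport st g a b = g \<sigma> (vtx b) * st (transition st g ?t \<sigma> (vtx b)) * st (g \<sigma> (vtx a) * st (transition st g ?t \<sigma> (vtx a)))"
    unfolding edge_transport_def using rep by simp
  also have "\<dots> = g \<sigma> (vtx b) * (st (transition st g {a,b} \<sigma> (vtx b)) * transition st g {a,b} \<sigma> (vtx a)) * st (g \<sigma> (vtx a))"
    using cs_st_mult[OF cs] cs_st_st[OF cs] by (simp add: mult.assoc)
  finally show "edge_transport st g a b = g \<sigma> (vtx b) * (st (transition st g {a,b} \<sigma> (vtx b)) * transition st g {a,b} \<sigma> (vtx a)) * st (g \<sigma> (vtx a))" .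
  show "unitary st (transition st g {a,b} \<sigma> (vtx a))"
    unfolding transition_def by (rule unitary_mul[OF cs unitary_st[OF cs u(2)] u(1)]) auto
  show "unitary st (transition st g {a,b} \<sigma> (vtx b))"
    unfolding transition_def by (rule unitary_mul[OF cs unitary_st[OF cs u(2)] u(1)]) auto
  have "norm (transition st g {a,b} \<sigma> (vtx b) - transition st g {a,b} \<sigma> (vtx a)) \<le> \<epsilon> * sdist ?t (vtx b) (vtx a)"
    by (rule fl[unfolded eps_flat_def, rule_format, OF tX sX sub pt(2) pt(1)])
  also have "sdist ?t (vtx b) (vtx a) = sqrt 2" using sdist_edge[of b a] ab by (simp add: insert_commute)
  finally show "norm (transition st g {a,b} \<sigma> (vtx b) - transition st g {a,b} \<sigma> (vtx a)) \<le> \<epsilon> * sqrt 2" .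
qed

theorem mainTheorem3:
  fixes st :: "'b::{real_normed_algebra_1, banach} \<Rightarrow> 'b"
    and cmul :: "complex \<Rightarrow> 'b \<Rightarrow> 'b"
    and X :: "'a set set"
    and g :: "'a set \<Rightarrow> ('a \<Rightarrow> real) \<Rightarrow> 'b"
    and v0 v1 v2 :: 'a
    and \<epsilon> :: real
  assumes "cstar_algebra st cmul"
    and "simplicial_complex X"
    and "{v0, v1, v2} \<in> X"
    and "v0 \<noteq> v1" and "v1 \<noteq> v2" and "v0 \<noteq> v2"
    and "trivialization_family st X g"
    and "eps_flat st X g \<epsilon>"
    and "\<epsilon> \<le> 1 / sqrt 2"
  shows "norm (path_transport st g [v0, v1, v2, v0] - 1) \<le> 7 * sqrt 2 * \<epsilon>"
proof -
  let ?s = "{v0, v1, v2}"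
  let ?P = "\<lambda>a b x. transition st g {a,b} ?s x"
  have m: "v0 \<in> ?s" "v1 \<in> ?s" "v2 \<in> ?s" by auto
  note E01 = edge_lemma[OF assms(1,2,3) m(1) m(2) assms(4) assms(7,8)]
  note E12 = edge_lemma[OF assms(1,2,3) m(2) m(3) assms(5) assms(7,8)]
  note E20 = edge_lemma[OF assms(1,2,3) m(3) m(1) assms(6)[symmetric] assms(7,8)]
  define A where "A = st (?P v2 v0 (vtx v0)) * ?P v2 v0 (vtx v2)"
  define B where "B = st (?P v1 v2 (vtx v2)) * ?P v1 v2 (vtx v1)"
  define C where "C = st (?P v0 v1 (vtx v1)) * ?P v0 v1 (vtx v0)"
  define G where "G = (\<lambda>v. g ?s (vtx v))"
  have fin: "finite ?s" by simp
  have uG: "unitary st (G v)" if "v \<in> ?s" for v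
    using assms(7,3) vtx_in[OF that fin] unfolding trivialization_family_def G_def by blast
  have uA: "unitary st A" unfolding A_def
    by (rule unitary_mul[OF assms(1) unitary_st[OF assms(1) E20(3)] E20(2)])
  have uB: "unitary st B" unfolding B_def
    by (rule unitary_mul[OF assms(1) unitary_st[OF assms(1) E12(3)] E12(2)])
  have uC: "unitary st C" unfolding C_def
    by (rule unitary_mul[OF assms(1) unitary_st[OF assms(1) E01(3)] E01(2)])
  have nA: "norm (A - 1) \<le> \<epsilon> * sqrt 2" unfolding A_def
    by (rule order_trans[OF diff_bound[OF assms(1) E20(3) E20(2)] E20(4)])
  have nB: "norm (B - 1) \<le> \<epsilon> * sqrt 2" unfolding B_def
    by (rule order_trans[OF diff_bound[OF assms(1) E12(3) E12(2)] E12(4)])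
  have nC: "norm (C - 1) \<le> \<epsilon> * sqrt 2" unfolding C_def
    by (rule order_trans[OF diff_bound[OF assms(1) E01(3) E01(2)] E01(4)])
  have eps0: "\<epsilon> \<ge> 0"
    
  proof (rule ccontr)
    assume "\<not> \<epsilon> \<ge> 0"
    then have "\<epsilon> * sqrt 2 < 0" by (simp add: mult_neg_pos)
    then show False using nA norm_ge_zero[of "A - 1"] by linarith
  qed
  have "path_transport st g [v0, v1, v2, v0] =
     edge_transport st g v2 v0 * (edge_transport st g v1 v2 * edge_transport st g v0 v1)"
    by (simp add: mult.assoc)
  also have "\<dots> = (G v0 * A * st (G v2)) * ((G v2 * B * st (G v1)) * (G v1 * C * st (G v0)))"
    unfolding E01(1) E12(1) E20(1) A_def B_def C_def G_def by (simp only: mult.assoc)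
  also have "\<dots> = G v0 * (A * (st (G v2) * G v2) * B * (st (G v1) * G v1) * C) * st (G v0)"
    by (simp add: mult.assoc)
  also have "\<dots> = G v0 * (A * B * C) * st (G v0)"
    using uG[of v1] uG[of v2] unfolding unitary_def by simp
  finally have eq: "path_transport st g [v0, v1, v2, v0] - 1 = G v0 * (A * B * C - 1) * st (G v0)"
    using uG[of v0] unfolding unitary_def by (simp add: right_diff_distrib left_diff_distrib)
  have "norm (G v0 * (A * B * C - 1) * st (G v0)) \<le> norm (G v0) * norm (A * B * C - 1) * norm (st (G v0))"
    by (rule order_trans[OF norm_mult_ineq mult_right_mono[OF norm_mult_ineq norm_ge_zero]])
  also have "\<dots> = norm (A * B * C - 1)"
    using unitary_norm[OF assms(1) uG] unitary_norm[OF assms(1) unitary_st[OF assms(1) uG]] by simp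
  also have "\<dots> \<le> 3 * (\<epsilon> * sqrt 2)" using three_bound[OF assms(1) uA uB uC] nA nB nC by simp
  also have "\<dots> \<le> 7 * sqrt 2 * \<epsilon>" using eps0 by simp
  finally show ?thesis using eq by simp
qed

end
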